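(* Let $A$ be a T-brace and let $n$ be a natural number. Then for every $a\in\zeta_n(\star,A)$, the subbrace $\mathbf{br}(a)$ generated by $a$ is an ideal of $A$.
   Context: A (left) brace is a set $A$ with two operations $+$ and $\cdot$ such that $(A,+)$ is an abelian group, $(A,\cdot)$ is a group, and $a(b+c)=ab+ac-a$ for all $a,b,c\in A$. Put $a\star b=ab-a-b$. A subbrace is a subset which is a subgroup of both $(A,+)$ and $(A,\cdot)$; $\mathbf{br}(a)$ is the intersection of all subbraces containing $a$. A subbrace $L$ is an ideal if $a\star z, z\star a\in L$ for all $a\in A$, $z\in L$, and then the quotient brace $A/L$ is defined. $A$ is a T-brace if whenever $I$ is an ideal of $J$ and $J$ is an ideal of $A$, then $I$ is an ideal of $A$. The $\star$-center is $\zeta(\star,A)=\{a: a\star x=x\star a=0\ \forall x\}$; the upper $\star$-central series is $\zeta_0(\star,A)=0$, $\zeta_{n+1}(\star,A)/\zeta_n(\star,A)=\zeta(\star,A/\zeta_n(\star,A))$, each term an ideal of $A$. *)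

theory Defs
  imports "HOL-Algebra.QuotRing"
begin

definition brace :: "('a, 'b) ring_scheme \<Rightarrow> bool" where
  "brace R \<longleftrightarrow> abelian_group R \<and> group R \<and>
     (\<forall>a\<in>carrier R. \<forall>b\<in>carrier R. \<forall>c\<in>carrier R.
        a \<otimes>\<^bsub>R\<^esub> (b \<oplus>\<^bsub>R\<^esub> c) = a \<otimes>\<^bsub>R\<^esub> b \<oplus>\<^bsub>R\<^esub> a \<otimes>\<^bsub>R\<^esub> c \<ominus>\<^bsub>R\<^esub> a)"

definition bstar :: "('a, 'b) ring_scheme \<Rightarrow> 'a \<Rightarrow> 'a \<Rightarrow> 'a" where
  "bstar R a b = a \<otimes>\<^bsub>R\<^esub> b \<ominus>\<^bsub>R\<^esub> a \<ominus>\<^bsub>R\<^esub> b"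

definition subbrace :: "('a, 'b) ring_scheme \<Rightarrow> 'a set \<Rightarrow> bool" where
  "subbrace R S \<longleftrightarrow> subgroup S (add_monoid R) \<and> subgroup S R"

definition br :: "('a, 'b) ring_scheme \<Rightarrow> 'a \<Rightarrow> 'a set" where
  "br R a = \<Inter>{S. subbrace R S \<and> a \<in> S}"

definition brace_ideal :: "('a, 'b) ring_scheme \<Rightarrow> 'a set \<Rightarrow> bool" where
  "brace_ideal R L \<longleftrightarrow> subbrace R L \<and>
     (\<forall>a\<in>carrier R. \<forall>z\<in>L. bstar R a z \<in> L \<and> bstar R z a \<in> L)"

definition T_brace :: "('a, 'b) ring_scheme \<Rightarrow> bool" where
  "T_brace R \<longleftrightarrow> brace R \<and>
     (\<forall>I J. brace_ideal R J \<and> brace_ideal (R\<lparr>carrier := J\<rparr>) I \<longrightarrow> brace_ideal R I)"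

definition star_center :: "('a, 'b) ring_scheme \<Rightarrow> 'a set" where
  "star_center R = {a \<in> carrier R. \<forall>x\<in>carrier R.
       bstar R a x = \<zero>\<^bsub>R\<^esub> \<and> bstar R x a = \<zero>\<^bsub>R\<^esub>}"

fun upper_star_central :: "('a, 'b) ring_scheme \<Rightarrow> nat \<Rightarrow> 'a set" where
  "upper_star_central R 0 = {\<zero>\<^bsub>R\<^esub>}"
| "upper_star_central R (Suc n) =
     {a \<in> carrier R. upper_star_central R n +>\<^bsub>R\<^esub> a
                      \<in> star_center (R Quot upper_star_central R n)}"

end

theory Submission imports Defs begin

locale brace_l = abelian_group A + group A for A (structure) +
  assumes bdistr: "\<lbrakk>a \<in> carrier A; b \<in> carrier A; c \<in> carrier A\<rbrakk> \<Longrightarrow>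
     a \<otimes> (b \<oplus> c) = a \<otimes> b \<oplus> a \<otimes> c \<ominus> a"
begin

abbreviation st (infixl "\<star>" 70) where "x \<star> y \<equiv> bstar A x y"

lemma st_closed[simp]: "x \<in> carrier A \<Longrightarrow> y \<in> carrier A \<Longrightarrow> x \<star> y \<in> carrier A"
  by (simp add: bstar_def)

lemma neg_zero0: "\<ominus> \<zero> = \<zero>"
  using minus_equality[of \<zero> \<zero>] by simp

lemma zero_one: "\<zero> = \<one>"
proof -
  have "\<one> \<otimes> (\<zero> \<oplus> \<zero>) = \<one> \<otimes> \<zero> \<oplus> \<one> \<otimes> \<zero> \<ominus> \<one>" by (rule bdistr) auto
  hence "\<zero> = \<zero> \<oplus> \<zero> \<ominus> \<one>" by simp
  hence "\<zero> = \<ominus> \<one>" by (simp add: a_minus_def)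
  hence "\<ominus> \<zero> = \<ominus> (\<ominus> \<one>)" by simp
  also have "\<dots> = \<one>" by (simp add: minus_minus)
  finally show ?thesis using neg_zero0 by simp
qed

lemma mult_eq: "x \<in> carrier A \<Longrightarrow> y \<in> carrier A \<Longrightarrow> x \<otimes> y = x \<oplus> y \<oplus> x \<star> y"
  unfolding bstar_def a_minus_def
  by (simp add: a_assoc a_comm r_neg2)

lemma distr2: "a \<in> carrier A \<Longrightarrow> b \<in> carrier A \<Longrightarrow> c \<in> carrier A \<Longrightarrow>
   a \<otimes> (b \<oplus> c) = a \<otimes> b \<oplus> a \<star> c \<oplus> c"
proof -
  assume C: "a \<in> carrier A" "b \<in> carrier A" "c \<in> carrier A"
  have "a \<otimes> (b \<oplus> c) = a \<otimes> b \<oplus> a \<otimes> c \<ominus> a" by (rule bdistr[OF C])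
  also have "a \<otimes> c = a \<oplus> c \<oplus> a \<star> c" by (rule mult_eq[OF C(1,3)])
  finally show ?thesis using C unfolding a_minus_def
    by (smt (verit) a_closed a_comm a_inv_closed a_lcomm add.inv_solve_left m_closed st_closed)
qed

lemma st_add_right: "y \<in> carrier A \<Longrightarrow> c \<in> carrier A \<Longrightarrow> d \<in> carrier A \<Longrightarrow>
   y \<star> (c \<oplus> d) = y \<star> c \<oplus> y \<star> d"
  unfolding bstar_def by (simp add: bdistr a_minus_def minus_add a_ac)

lemma mult_zero_r[simp]: "y \<in> carrier A \<Longrightarrow> y \<otimes> \<zero> = y"
  using zero_one r_one by simp
lemma mult_zero_l[simp]: "y \<in> carrier A \<Longrightarrow> \<zero> \<otimes> y = y"
  using zero_one l_one by simp
lemma neg_zero[simp]: "\<ominus> \<zero> = \<zero>"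
  by (metis l_zero zero_closed minus_equality)
lemma st_zero_r[simp]: "y \<in> carrier A \<Longrightarrow> y \<star> \<zero> = \<zero>"
  unfolding bstar_def by (simp add: a_minus_def r_neg)
lemma st_zero_l[simp]: "y \<in> carrier A \<Longrightarrow> \<zero> \<star> y = \<zero>"
  unfolding bstar_def by (simp add: a_minus_def r_neg)

lemma inv_distr: "a \<in> carrier A \<Longrightarrow> z \<in> carrier A \<Longrightarrow> inv a \<otimes> (a \<oplus> z) = (inv a) \<star> z \<oplus> z"
  by (simp add: distr2 zero_one[symmetric])

lemma minus_rel: "x \<in> carrier A \<Longrightarrow> y \<in> carrier A \<Longrightarrow> x = y \<oplus> (x \<ominus> y)"
  unfolding a_minus_def using a_lcomm add.inv_solve_left add.inv_solve_right add.inv_solve_right' by simp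

lemma st_as_minus: "x \<in> carrier A \<Longrightarrow> y \<in> carrier A \<Longrightarrow> x \<otimes> y \<ominus> (x \<oplus> y) = x \<star> y"
  unfolding bstar_def a_minus_def by (simp add: a_assoc local.minus_add)

end

definition cz :: "('a, 'b) ring_scheme \<Rightarrow> 'a set \<Rightarrow> 'a set" where
  "cz R Z = {c \<in> carrier R. \<forall>y\<in>carrier R. bstar R c y \<in> Z \<and> bstar R y c \<in> Z}"

definition bz :: "('a, 'b) ring_scheme \<Rightarrow> 'a set \<Rightarrow> 'a set \<Rightarrow> 'a set" where
  "bz R Z B = {x \<in> carrier R. \<exists>b\<in>B. x \<ominus>\<^bsub>R\<^esub> b \<in> Z}"

locale bideal = brace_l + fixes Z assumes bid: "brace_ideal A Z"
begin

lemma Z_asub: "subgroup Z (add_monoid A)" and Z_msub: "subgroup Z A"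
  and Z_st1: "x \<in> carrier A \<Longrightarrow> z \<in> Z \<Longrightarrow> x \<star> z \<in> Z"
  and Z_st2: "x \<in> carrier A \<Longrightarrow> z \<in> Z \<Longrightarrow> z \<star> x \<in> Z"
  using bid unfolding brace_ideal_def subbrace_def by auto

lemma ZC: "z \<in> Z \<Longrightarrow> z \<in> carrier A"
  by (rule subgroup.mem_carrier[OF Z_msub])

lemma Z_add: "x \<in> Z \<Longrightarrow> y \<in> Z \<Longrightarrow> x \<oplus> y \<in> Z"
  using subgroup.m_closed[OF Z_asub] by simp
lemma Z_neg: "x \<in> Z \<Longrightarrow> \<ominus> x \<in> Z"
  using subgroup.m_inv_closed[OF Z_asub] ZC by (simp add: a_inv_def)
lemma Z_zero: "\<zero> \<in> Z"
  using subgroup.one_closed[OF Z_asub] by simp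
lemma Z_mult: "x \<in> Z \<Longrightarrow> y \<in> Z \<Longrightarrow> x \<otimes> y \<in> Z"
  using subgroup.m_closed[OF Z_msub] by simp
lemma Z_inv: "x \<in> Z \<Longrightarrow> inv x \<in> Z"
  using subgroup.m_inv_closed[OF Z_msub] by simp
lemma Z_minus: "x \<in> Z \<Longrightarrow> y \<in> Z \<Longrightarrow> x \<ominus> y \<in> Z"
  by (simp add: a_minus_def Z_add Z_neg)

sublocale Zs: abelian_subgroup Z A
  by (rule abelian_subgroupI3) (auto intro: additive_subgroup.intro Z_asub abelian_group_axioms)

abbreviation cl where "cl x \<equiv> Z +> x"

lemma cl_eq: "x \<in> carrier A \<Longrightarrow> y \<in> carrier A \<Longrightarrow> (cl x = cl y) = (x \<ominus> y \<in> Z)"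
proof
  assume C: "x \<in> carrier A" "y \<in> carrier A"
  assume "cl x = cl y"
  hence "x \<in> cl y" using Zs.a_rcos_self[OF C(1)] by simp
  thus "x \<ominus> y \<in> Z" using Zs.a_rcos_module[OF C(2,1)] by (simp add: a_minus_def)
next
  assume C: "x \<in> carrier A" "y \<in> carrier A"
  assume "x \<ominus> y \<in> Z"
  hence "x \<in> cl y" using Zs.a_rcos_module[OF C(2,1)] by (simp add: a_minus_def)
  thus "cl x = cl y" using Zs.a_repr_independence'[OF _ C(2)] by simp
qed

lemma cl_zero: "cl \<zero> = Z"
  by (rule Zs.a_rcos_const[OF Z_zero])

lemma cl_is_Z: "x \<in> carrier A \<Longrightarrow> (cl x = Z) = (x \<in> Z)"
  using cl_eq[of x \<zero>] cl_zero by (simp add: a_minus_def)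

lemma cl_add: "x \<in> carrier A \<Longrightarrow> y \<in> carrier A \<Longrightarrow> cl (x \<oplus> y) = cl x <+> cl y"
  by (simp add: Zs.a_rcos_sum)

lemma cl_neg: "x \<in> carrier A \<Longrightarrow> cl (\<ominus> x) = a_set_inv (cl x)"
  by (simp add: Zs.a_rcos_inv)

lemma cl_minus: "x \<in> carrier A \<Longrightarrow> y \<in> carrier A \<Longrightarrow> cl (x \<ominus> y) = cl x <+> a_set_inv (cl y)"
  by (simp add: a_minus_def cl_add cl_neg)

lemma cl_addZ: "x \<in> carrier A \<Longrightarrow> z \<in> Z \<Longrightarrow> cl (x \<oplus> z) = cl x"
  using cl_eq[of "x \<oplus> z" x] ZC
  by (metis a_closed minus_rel Zs.a_rcos_sum cl_zero Zs.a_rcos_const zero_closed r_zero)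

lemma cl_MA: "x \<in> carrier A \<Longrightarrow> y \<in> carrier A \<Longrightarrow> w \<in> Z \<Longrightarrow> cl (x \<otimes> (y \<oplus> w)) = cl (x \<otimes> y)"
proof -
  assume C: "x \<in> carrier A" "y \<in> carrier A" "w \<in> Z"
  have "x \<otimes> (y \<oplus> w) = x \<otimes> y \<oplus> (x \<star> w \<oplus> w)"
    using distr2[OF C(1,2) ZC[OF C(3)]] ZC[OF C(3)] C by (simp add: a_assoc)
  thus ?thesis using cl_addZ C Z_add Z_st1 by simp
qed

lemma cl_MB: "x \<in> carrier A \<Longrightarrow> y \<in> carrier A \<Longrightarrow> cl x = cl y \<Longrightarrow> inv y \<otimes> x \<in> Z"
proof -
  assume C: "x \<in> carrier A" "y \<in> carrier A" "cl x = cl y"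
  hence z: "x \<ominus> y \<in> Z" using cl_eq by simp
  have "x = y \<oplus> (x \<ominus> y)" using C minus_rel by simp
  hence "inv y \<otimes> x = inv y \<star> (x \<ominus> y) \<oplus> (x \<ominus> y)"
    using inv_distr[OF C(2), of "x \<ominus> y"] C by simp
  thus ?thesis using z Z_add Z_st1 C by simp
qed

lemma cl_mult: "x \<in> carrier A \<Longrightarrow> y \<in> carrier A \<Longrightarrow> x' \<in> carrier A \<Longrightarrow> y' \<in> carrier A \<Longrightarrow>
  cl x = cl y \<Longrightarrow> cl x' = cl y' \<Longrightarrow> cl (x \<otimes> x') = cl (y \<otimes> y')"
proof -
  assume C: "x \<in> carrier A" "y \<in> carrier A" "x' \<in> carrier A" "y' \<in> carrier A"
    and e: "cl x = cl y" "cl x' = cl y'"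
  have w: "x' \<ominus> y' \<in> Z" using e C cl_eq by simp
  have "cl (x \<otimes> x') = cl (x \<otimes> (y' \<oplus> (x' \<ominus> y')))" using minus_rel C by simp
  also have "\<dots> = cl (x \<otimes> y')" using cl_MA C w by simp
  finally have 1: "cl (x \<otimes> x') = cl (x \<otimes> y')" .
  define k where "k = inv y \<otimes> x"
  have k: "k \<in> Z" using cl_MB C e k_def by simp
  have kC: "k \<in> carrier A" using ZC k .
  have xk: "x = y \<otimes> k" unfolding k_def using C by (simp add: m_assoc[symmetric])
  have "k \<otimes> y' = y' \<oplus> (k \<oplus> k \<star> y')" using mult_eq[OF kC C(4)] kC C
    by (simp add: a_ac)
  hence "x \<otimes> y' = y \<otimes> (y' \<oplus> (k \<oplus> k \<star> y'))" using xk C kC by (simp add: m_assoc)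
  hence "cl (x \<otimes> y') = cl (y \<otimes> y')" using cl_MA C k Z_add Z_st2 by simp
  with 1 show ?thesis by simp
qed

lemma cl_inv: "x \<in> carrier A \<Longrightarrow> y \<in> carrier A \<Longrightarrow> cl x = cl y \<Longrightarrow> cl (inv x) = cl (inv y)"
proof -
  assume C: "x \<in> carrier A" "y \<in> carrier A" and e: "cl x = cl y"
  define k where "k = inv y \<otimes> x"
  have k: "k \<in> Z" using cl_MB C e k_def by simp
  have kC: "k \<in> carrier A" using ZC k .
  have ik: "inv k \<in> Z" using Z_inv k .
  have ikC: "inv k \<in> carrier A" using kC by simp
  have xk: "x = y \<otimes> k" unfolding k_def using C by (simp add: m_assoc[symmetric])
  have "inv x = inv k \<otimes> inv y" using xk C kC by (simp add: inv_mult_group)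
  also have "\<dots> = inv y \<oplus> (inv k \<oplus> inv k \<star> inv y)" using mult_eq[OF ikC, of "inv y"] C ikC
    by (simp add: a_ac)
  finally show ?thesis using cl_addZ C ik Z_add Z_st2 by simp
qed

lemma cl_st: "x \<in> carrier A \<Longrightarrow> y \<in> carrier A \<Longrightarrow> x' \<in> carrier A \<Longrightarrow> y' \<in> carrier A \<Longrightarrow>
  cl x = cl y \<Longrightarrow> cl x' = cl y' \<Longrightarrow> cl (x \<star> x') = cl (y \<star> y')"
proof -
  assume C: "x \<in> carrier A" "y \<in> carrier A" "x' \<in> carrier A" "y' \<in> carrier A"
    and e: "cl x = cl y" "cl x' = cl y'"
  have m: "cl (x \<otimes> x') = cl (y \<otimes> y')" using cl_mult[OF C e] .
  have x1: "cl (x \<star> x') = cl (x \<otimes> x' \<ominus> x) <+> a_set_inv (cl x')"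
    unfolding bstar_def by (rule cl_minus) (use C in auto)
  have x2: "cl (x \<otimes> x' \<ominus> x) = cl (x \<otimes> x') <+> a_set_inv (cl x)"
    by (rule cl_minus) (use C in auto)
  have y1: "cl (y \<star> y') = cl (y \<otimes> y' \<ominus> y) <+> a_set_inv (cl y')"
    unfolding bstar_def by (rule cl_minus) (use C in auto)
  have y2: "cl (y \<otimes> y' \<ominus> y) = cl (y \<otimes> y') <+> a_set_inv (cl y)"
    by (rule cl_minus) (use C in auto)
  show ?thesis unfolding x1 x2 y1 y2 m e(1) e(2) ..
qed

lemma st_Z_iff: "x \<in> carrier A \<Longrightarrow> y \<in> carrier A \<Longrightarrow> (x \<star> y \<in> Z) = (cl (x \<otimes> y) = cl (x \<oplus> y))"
  using cl_eq[of "x \<otimes> y" "x \<oplus> y"] st_as_minus by simp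

end

context bideal begin

lemma cz_iff: "c \<in> cz A Z \<longleftrightarrow> c \<in> carrier A \<and>
   (\<forall>y\<in>carrier A. cl (c \<otimes> y) = cl (c \<oplus> y) \<and> cl (y \<otimes> c) = cl (y \<oplus> c))"
  unfolding cz_def using st_Z_iff by auto

lemma cz_C: "c \<in> cz A Z \<Longrightarrow> c \<in> carrier A" unfolding cz_def by auto

lemma Z_cz: "Z \<subseteq> cz A Z"
  unfolding cz_def using Z_st1 Z_st2 ZC by auto

lemma cz_L: "c \<in> cz A Z \<Longrightarrow> y \<in> carrier A \<Longrightarrow> cl (c \<otimes> y) = cl (c \<oplus> y)"
  using cz_iff by auto
lemma cz_R: "c \<in> cz A Z \<Longrightarrow> y \<in> carrier A \<Longrightarrow> cl (y \<otimes> c) = cl (y \<oplus> c)"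
  using cz_iff by auto

lemma cz_cl: "c \<in> cz A Z \<Longrightarrow> x \<in> carrier A \<Longrightarrow> cl x = cl c \<Longrightarrow> x \<in> cz A Z"
proof -
  assume c: "c \<in> cz A Z" and x: "x \<in> carrier A" and e: "cl x = cl c"
  have cC: "c \<in> carrier A" using cz_C c .
  { fix y assume y: "y \<in> carrier A"
    have "cl (x \<star> y) = cl (c \<star> y)" using cl_st[OF x cC y y e] by simp
    moreover have "c \<star> y \<in> Z" using c y unfolding cz_def by auto
    ultimately have 1: "x \<star> y \<in> Z" using cl_is_Z x y cC by (metis st_closed)
    have "cl (y \<star> x) = cl (y \<star> c)" using cl_st[OF y y x cC _ e] by simp
    moreover have "y \<star> c \<in> Z" using c y unfolding cz_def by auto
    ultimately have "y \<star> x \<in> Z" using cl_is_Z x y cC by (metis st_closed)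
    note 1 this }
  thus ?thesis unfolding cz_def using x by auto
qed

lemma cz_zero: "\<zero> \<in> cz A Z"
  using Z_cz Z_zero by auto

lemma cz_add: "c \<in> cz A Z \<Longrightarrow> d \<in> cz A Z \<Longrightarrow> c \<oplus> d \<in> cz A Z"
proof -
  assume c: "c \<in> cz A Z" and d: "d \<in> cz A Z"
  have cC: "c \<in> carrier A" using cz_C c .
  have dC: "d \<in> carrier A" using cz_C d .
  have cd: "cl (c \<oplus> d) = cl (c \<otimes> d)" using cz_L[OF c dC] by simp
  { fix y assume y: "y \<in> carrier A"
    have "cl ((c \<oplus> d) \<otimes> y) = cl ((c \<otimes> d) \<otimes> y)"
      using cl_mult[OF _ _ y y cd] cC dC by simp
    also have "\<dots> = cl (c \<otimes> (d \<otimes> y))" using cC dC y by (simp add: m_assoc)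
    also have "\<dots> = cl (c \<oplus> d \<otimes> y)" using cz_L[OF c] dC y by simp
    also have "\<dots> = cl c <+> cl (d \<otimes> y)" using cl_add cC dC y by simp
    also have "\<dots> = cl c <+> cl (d \<oplus> y)" using cz_L[OF d y] by simp
    also have "\<dots> = cl (c \<oplus> (d \<oplus> y))" using cl_add cC dC y by simp
    also have "\<dots> = cl ((c \<oplus> d) \<oplus> y)" using cC dC y by (simp add: a_assoc)
    finally have 1: "(c \<oplus> d) \<star> y \<in> Z" using st_Z_iff cC dC y by simp
    have "y \<star> (c \<oplus> d) = y \<star> c \<oplus> y \<star> d" using st_add_right y cC dC by simp
    moreover have "y \<star> c \<in> Z" "y \<star> d \<in> Z" using c d y unfolding cz_def by auto
    ultimately have "y \<star> (c \<oplus> d) \<in> Z" using Z_add by simp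
    note 1 this }
  thus ?thesis unfolding cz_def using cC dC by auto
qed

lemma cz_inv: "c \<in> cz A Z \<Longrightarrow> inv c \<in> cz A Z \<and> cl (inv c) = cl (\<ominus> c)"
proof -
  assume c: "c \<in> cz A Z"
  have cC: "c \<in> carrier A" using cz_C c .
  have icC: "inv c \<in> carrier A" using cC by simp
  have "cl (c \<oplus> inv c) = cl (c \<otimes> inv c)" using cz_L[OF c icC] by simp
  also have "\<dots> = Z" using cC cl_zero zero_one by simp
  finally have "c \<oplus> inv c \<in> Z" using cl_is_Z cC icC by simp
  hence "inv c \<ominus> \<ominus> c \<in> Z" using cC icC by (simp add: a_minus_def minus_minus a_comm)
  hence e: "cl (inv c) = cl (\<ominus> c)" using cl_eq cC icC by simp
  { fix y assume y: "y \<in> carrier A"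
    define w where "w = inv c \<otimes> y"
    have wC: "w \<in> carrier A" using w_def icC y by simp
    have "y = c \<otimes> w" unfolding w_def using cC y by (simp add: m_assoc[symmetric])
    hence "cl y = cl (c \<oplus> w)" using cz_L[OF c wC] by simp
    hence "cl (inv c \<oplus> y) = cl (\<ominus> c \<oplus> (c \<oplus> w))"
      using cl_add e icC cC y wC by simp
    also have "\<dots> = cl w" using cC wC by (simp add: r_neg1)
    finally have 1: "inv c \<star> y \<in> Z" using st_Z_iff icC y w_def by simp
    define w' where "w' = y \<otimes> inv c"
    have w'C: "w' \<in> carrier A" using w'_def icC y by simp
    have "y = w' \<otimes> c" unfolding w'_def using cC y by (simp add: m_assoc)
    hence "cl y = cl (w' \<oplus> c)" using cz_R[OF c w'C] by simp
    hence "cl (y \<oplus> inv c) = cl ((w' \<oplus> c) \<oplus> \<ominus> c)"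
      using cl_add e icC cC y w'C by simp
    also have "\<dots> = cl w'" using cC w'C by (simp add: a_assoc r_neg)
    finally have "y \<star> inv c \<in> Z" using st_Z_iff icC y w'_def by simp
    note 1 this }
  hence "inv c \<in> cz A Z" unfolding cz_def using icC by auto
  with e show ?thesis by simp
qed

lemma cz_neg: "c \<in> cz A Z \<Longrightarrow> \<ominus> c \<in> cz A Z"
  using cz_inv cz_cl cz_C by (metis a_inv_closed)

lemma cz_mult: "c \<in> cz A Z \<Longrightarrow> d \<in> cz A Z \<Longrightarrow> c \<otimes> d \<in> cz A Z"
  using cz_cl[OF cz_add] cz_L cz_C by (metis m_closed)

lemma cz_ideal: "brace_ideal A (cz A Z)"
proof -
  have s: "cz A Z \<subseteq> carrier A" using cz_C by auto
  have a: "subgroup (cz A Z) (add_monoid A)"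
    by (rule subgroup.intro) (auto simp: cz_add cz_zero cz_neg cz_C a_inv_def[symmetric])
  have m: "subgroup (cz A Z) A"
    by (rule subgroup.intro) (auto simp: cz_mult cz_zero[unfolded zero_one] cz_inv cz_C)
  have st: "\<forall>x\<in>carrier A. \<forall>z\<in>cz A Z. x \<star> z \<in> cz A Z \<and> z \<star> x \<in> cz A Z"
  proof (intro ballI conjI)
    fix x z assume x: "x \<in> carrier A" and z: "z \<in> cz A Z"
    have "x \<star> z \<in> Z" using z x unfolding cz_def by auto
    thus "x \<star> z \<in> cz A Z" by (rule subsetD[OF Z_cz])
    have "z \<star> x \<in> Z" using z x unfolding cz_def by auto
    thus "z \<star> x \<in> cz A Z" by (rule subsetD[OF Z_cz])
  qed
  show ?thesis unfolding brace_ideal_def subbrace_def using a m st by simp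
qed

end

context bideal begin

lemma rcos_elem: "X \<in> a_rcosets Z \<Longrightarrow> \<exists>x\<in>carrier A. X = cl x"
  unfolding A_RCOSETS_def' by auto

lemma cl_in: "x \<in> carrier A \<Longrightarrow> cl x \<in> a_rcosets Z"
  unfolding A_RCOSETS_def' by auto

lemma Q_carrier: "carrier (A Quot Z) = a_rcosets Z" by (simp add: FactRing_def)
lemma Q_zero: "zero (A Quot Z) = Z" by (simp add: FactRing_def)
lemma Q_add: "x \<in> carrier A \<Longrightarrow> y \<in> carrier A \<Longrightarrow> cl x \<oplus>\<^bsub>A Quot Z\<^esub> cl y = cl (x \<oplus> y)"
  by (simp add: FactRing_def cl_add)

lemma Q_mult: "x \<in> carrier A \<Longrightarrow> y \<in> carrier A \<Longrightarrow> cl x \<otimes>\<^bsub>A Quot Z\<^esub> cl y = cl (x \<otimes> y)"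
proof -
  assume C: "x \<in> carrier A" "y \<in> carrier A"
  have "\<And>a b. a \<in> cl x \<Longrightarrow> b \<in> cl y \<Longrightarrow> cl (a \<otimes> b) = cl (x \<otimes> y)"
  proof -
    fix a b assume a: "a \<in> cl x" and b: "b \<in> cl y"
    have aC: "a \<in> carrier A" using Zs.a_elemrcos_carrier[OF C(1) a] .
    have bC: "b \<in> carrier A" using Zs.a_elemrcos_carrier[OF C(2) b] .
    have "cl a = cl x" using Zs.a_repr_independence'[OF a C(1)] by simp
    moreover have "cl b = cl y" using Zs.a_repr_independence'[OF b C(2)] by simp
    ultimately show "cl (a \<otimes> b) = cl (x \<otimes> y)" using cl_mult[OF aC C(1) bC C(2)] by simp
  qed
  moreover have "x \<in> cl x" "y \<in> cl y" using Zs.a_rcos_self C by auto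
  ultimately have "(\<Union>a\<in>cl x. \<Union>b\<in>cl y. cl (a \<otimes> b)) = cl (x \<otimes> y)" by blast
  thus ?thesis by (simp add: FactRing_def rcoset_mult_def)
qed

lemma Q_neg: "x \<in> carrier A \<Longrightarrow> \<ominus>\<^bsub>A Quot Z\<^esub> cl x = cl (\<ominus> x)"
proof -
  assume C: "x \<in> carrier A"
  have nC: "\<ominus> x \<in> carrier A" using C by simp
  have eq: "\<ominus>\<^bsub>A Quot Z\<^esub> cl x = (THE Y. Y \<in> a_rcosets Z \<and> cl x <+> Y = Z \<and> Y <+> cl x = Z)"
    by (simp add: a_inv_def m_inv_def FactRing_def)
  have "(THE Y. Y \<in> a_rcosets Z \<and> cl x <+> Y = Z \<and> Y <+> cl x = Z) = cl (\<ominus> x)"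
  proof (rule the_equality)
    show "cl (\<ominus> x) \<in> a_rcosets Z \<and> cl x <+> cl (\<ominus> x) = Z \<and> cl (\<ominus> x) <+> cl x = Z"
      using cl_in[OF nC] cl_add[symmetric] C nC cl_zero by (simp add: r_neg l_neg)
  next
    fix Y assume Y: "Y \<in> a_rcosets Z \<and> cl x <+> Y = Z \<and> Y <+> cl x = Z"
    then obtain w where w: "w \<in> carrier A" "Y = cl w" using rcos_elem by blast
    hence "cl (x \<oplus> w) = Z" using Y cl_add C by simp
    hence "x \<oplus> w \<in> Z" using cl_is_Z C w by simp
    hence "w \<ominus> \<ominus> x \<in> Z" using C w by (simp add: a_minus_def minus_minus a_comm)
    thus "Y = cl (\<ominus> x)" using cl_eq w nC by simp
  qed
  thus ?thesis using eq by simp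
qed

lemma Q_st: "x \<in> carrier A \<Longrightarrow> y \<in> carrier A \<Longrightarrow> bstar (A Quot Z) (cl x) (cl y) = cl (x \<star> y)"
  unfolding bstar_def a_minus_def
  by (simp add: Q_mult Q_neg Q_add)

lemma usc_step: "{a \<in> carrier A. cl a \<in> star_center (A Quot Z)} = cz A Z"
proof -
  have "\<And>a. a \<in> carrier A \<Longrightarrow> cl a \<in> star_center (A Quot Z) \<longleftrightarrow> a \<in> cz A Z"
  proof -
    fix a assume a: "a \<in> carrier A"
    have "cl a \<in> star_center (A Quot Z) \<longleftrightarrow>
       (\<forall>Y\<in>a_rcosets Z. bstar (A Quot Z) (cl a) Y = Z \<and> bstar (A Quot Z) Y (cl a) = Z)"
      unfolding star_center_def Q_carrier Q_zero using cl_in a by auto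
    also have "\<dots> \<longleftrightarrow> (\<forall>y\<in>carrier A. bstar (A Quot Z) (cl a) (cl y) = Z \<and> bstar (A Quot Z) (cl y) (cl a) = Z)"
    proof
      assume H: "\<forall>Y\<in>a_rcosets Z. bstar (A Quot Z) (cl a) Y = Z \<and> bstar (A Quot Z) Y (cl a) = Z"
      show "\<forall>y\<in>carrier A. bstar (A Quot Z) (cl a) (cl y) = Z \<and> bstar (A Quot Z) (cl y) (cl a) = Z"
      proof
        fix y assume "y \<in> carrier A"
        thus "bstar (A Quot Z) (cl a) (cl y) = Z \<and> bstar (A Quot Z) (cl y) (cl a) = Z"
          using H cl_in by simp
      qed
    next
      assume H: "\<forall>y\<in>carrier A. bstar (A Quot Z) (cl a) (cl y) = Z \<and> bstar (A Quot Z) (cl y) (cl a) = Z"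
      show "\<forall>Y\<in>a_rcosets Z. bstar (A Quot Z) (cl a) Y = Z \<and> bstar (A Quot Z) Y (cl a) = Z"
      proof
        fix Y assume "Y \<in> a_rcosets Z"
        then obtain y where "y \<in> carrier A" "Y = cl y" using rcos_elem by blast
        thus "bstar (A Quot Z) (cl a) Y = Z \<and> bstar (A Quot Z) Y (cl a) = Z" using H by simp
      qed
    qed
    also have "\<dots> \<longleftrightarrow> (\<forall>y\<in>carrier A. a \<star> y \<in> Z \<and> y \<star> a \<in> Z)"
      using Q_st a cl_is_Z by simp
    finally show "cl a \<in> star_center (A Quot Z) \<longleftrightarrow> a \<in> cz A Z" unfolding cz_def using a by simp
  qed
  note H = this
  show ?thesis
  proof
    show "{a \<in> carrier A. cl a \<in> star_center (A Quot Z)} \<subseteq> cz A Z" using H by blast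
    show "cz A Z \<subseteq> {a \<in> carrier A. cl a \<in> star_center (A Quot Z)}" using H cz_C by blast
  qed
qed

end

context brace_l begin

lemma sb_a: "subbrace A B \<Longrightarrow> subgroup B (add_monoid A)" by (simp add: subbrace_def)
lemma sb_m: "subbrace A B \<Longrightarrow> subgroup B A" by (simp add: subbrace_def)
lemma sb_C: "subbrace A B \<Longrightarrow> x \<in> B \<Longrightarrow> x \<in> carrier A"
  by (rule subgroup.mem_carrier[OF sb_m])
lemma sb_add: assumes "subbrace A B" "x \<in> B" "y \<in> B" shows "x \<oplus> y \<in> B"
  using subgroup.m_closed[OF sb_a[OF assms(1)] assms(2,3)] by simp
lemma sb_neg: assumes "subbrace A B" "x \<in> B" shows "\<ominus> x \<in> B"
  using subgroup.m_inv_closed[OF sb_a[OF assms(1)] assms(2)] by (simp add: a_inv_def)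
lemma sb_zero: assumes "subbrace A B" shows "\<zero> \<in> B"
  using subgroup.one_closed[OF sb_a[OF assms(1)]] by simp
lemma sb_mult: assumes "subbrace A B" "x \<in> B" "y \<in> B" shows "x \<otimes> y \<in> B"
  using subgroup.m_closed[OF sb_m[OF assms(1)] assms(2,3)] .
lemma sb_inv: assumes "subbrace A B" "x \<in> B" shows "inv x \<in> B"
  using subgroup.m_inv_closed[OF sb_m[OF assms(1)] assms(2)] .
lemma sb_st: "subbrace A B \<Longrightarrow> x \<in> B \<Longrightarrow> y \<in> B \<Longrightarrow> x \<star> y \<in> B"
  unfolding bstar_def a_minus_def by (intro sb_add sb_neg sb_mult) auto

lemma restr_inv: "subgroup J (add_monoid A) \<Longrightarrow> y \<in> J \<Longrightarrow> a_inv (A\<lparr>carrier := J\<rparr>) y = \<ominus> y"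
proof -
  assume J: "subgroup J (add_monoid A)" and y: "y \<in> J"
  have "add_monoid (A\<lparr>carrier := J\<rparr>) = (add_monoid A)\<lparr>carrier := J\<rparr>" by simp
  thus ?thesis using add.m_inv_consistent[OF J y] by (simp add: a_inv_def)
qed

lemma restr_ideal:
  assumes I: "subbrace A I" and J: "subbrace A J" and IJ: "I \<subseteq> J"
    and st: "\<And>u v. u \<in> J \<Longrightarrow> v \<in> I \<Longrightarrow> u \<star> v \<in> I \<and> v \<star> u \<in> I"
  shows "brace_ideal (A\<lparr>carrier := J\<rparr>) I"
proof -
  have Ja: "subgroup J (add_monoid A)" and Jm: "subgroup J A" using J unfolding subbrace_def by auto
  have Ia: "subgroup I (add_monoid A)" and Im: "subgroup I A" using I unfolding subbrace_def by auto
  have "subgroup I ((add_monoid A)\<lparr>carrier := J\<rparr>)" using add.subgroup_incl[OF Ia Ja IJ] .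
  moreover have "add_monoid (A\<lparr>carrier := J\<rparr>) = (add_monoid A)\<lparr>carrier := J\<rparr>" by simp
  ultimately have 1: "subgroup I (add_monoid (A\<lparr>carrier := J\<rparr>))" by simp
  have 2: "subgroup I (A\<lparr>carrier := J\<rparr>)" using subgroup_incl[OF Im Jm IJ] .
  have bs: "\<And>u v. u \<in> J \<Longrightarrow> v \<in> J \<Longrightarrow> bstar (A\<lparr>carrier := J\<rparr>) u v = u \<star> v"
  proof -
    fix u v assume u: "u \<in> J" and v: "v \<in> J"
    show "bstar (A\<lparr>carrier := J\<rparr>) u v = u \<star> v"
      unfolding bstar_def a_minus_def using restr_inv[OF Ja] u v by simp
  qed
  show ?thesis unfolding brace_ideal_def subbrace_def using 1 2 bs st IJ by auto
qed

lemma zero_ideal: "brace_ideal A {\<zero>}"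
proof -
  have "subgroup {\<zero>} (add_monoid A)" using add.triv_subgroup by simp
  moreover have "subgroup {\<zero>} A" using triv_subgroup zero_one by simp
  ultimately show ?thesis unfolding brace_ideal_def subbrace_def by auto
qed

lemma bz_zero: "subbrace A B \<Longrightarrow> bz A {\<zero>} B = B"
proof -
  assume B: "subbrace A B"
  have "\<And>x b. x \<in> carrier A \<Longrightarrow> b \<in> B \<Longrightarrow> x \<ominus> b = \<zero> \<Longrightarrow> x \<in> B"
    using minus_rel sb_C B by (metis r_zero)
  moreover have "\<And>b. b \<in> B \<Longrightarrow> b \<ominus> b = \<zero>" using sb_C B by (simp add: a_minus_def r_neg)
  ultimately show ?thesis unfolding bz_def using sb_C B by blast
qed

lemma br_props: assumes a: "a \<in> carrier A"
  shows "subbrace A (br A a)" "a \<in> br A a" "\<And>S. subbrace A S \<Longrightarrow> a \<in> S \<Longrightarrow> br A a \<subseteq> S"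
proof -
  let ?F = "{S. subbrace A S \<and> a \<in> S}"
  have c: "carrier A \<in> ?F" using a add.subgroup_self subgroup_self unfolding subbrace_def by simp
  have "subgroup (\<Inter>?F) (add_monoid A)"
    by (rule add.subgroups_Inter) (use c in \<open>auto simp: subbrace_def\<close>)
  moreover have "subgroup (\<Inter>?F) A"
    by (rule subgroups_Inter) (use c in \<open>auto simp: subbrace_def\<close>)
  ultimately show "subbrace A (br A a)" unfolding br_def subbrace_def by simp
  show "a \<in> br A a" unfolding br_def by auto
  show "\<And>S. subbrace A S \<Longrightarrow> a \<in> S \<Longrightarrow> br A a \<subseteq> S" unfolding br_def by auto
qed

end

context bideal begin

lemma bz_iff: "subbrace A B \<Longrightarrow> x \<in> bz A Z B \<longleftrightarrow> x \<in> carrier A \<and> (\<exists>b\<in>B. cl x = cl b)"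
  unfolding bz_def using cl_eq sb_C by blast

lemma bz_subbrace: assumes B: "subbrace A B" shows "subbrace A (bz A Z B)"
proof -
  have s: "bz A Z B \<subseteq> carrier A" unfolding bz_def by auto
  have add: "\<And>x y. x \<in> bz A Z B \<Longrightarrow> y \<in> bz A Z B \<Longrightarrow> x \<oplus> y \<in> bz A Z B"
  proof -
    fix x y assume "x \<in> bz A Z B" "y \<in> bz A Z B"
    then obtain b b' where "x \<in> carrier A" "y \<in> carrier A" "b \<in> B" "b' \<in> B" "cl x = cl b" "cl y = cl b'"
      using bz_iff[OF B] by blast
    thus "x \<oplus> y \<in> bz A Z B" using bz_iff[OF B] cl_add sb_C[OF B] sb_add[OF B]
      by (metis a_closed)
  qed
  have neg: "\<And>x. x \<in> bz A Z B \<Longrightarrow> \<ominus> x \<in> bz A Z B"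
  proof -
    fix x assume "x \<in> bz A Z B"
    then obtain b where "x \<in> carrier A" "b \<in> B" "cl x = cl b"
      using bz_iff[OF B] by blast
    thus "\<ominus> x \<in> bz A Z B" using bz_iff[OF B] cl_neg sb_C[OF B] sb_neg[OF B]
      by (metis a_inv_closed)
  qed
  have mul: "\<And>x y. x \<in> bz A Z B \<Longrightarrow> y \<in> bz A Z B \<Longrightarrow> x \<otimes> y \<in> bz A Z B"
  proof -
    fix x y assume "x \<in> bz A Z B" "y \<in> bz A Z B"
    then obtain b b' where "x \<in> carrier A" "y \<in> carrier A" "b \<in> B" "b' \<in> B" "cl x = cl b" "cl y = cl b'"
      using bz_iff[OF B] by blast
    thus "x \<otimes> y \<in> bz A Z B" using bz_iff[OF B] cl_mult sb_C[OF B] sb_mult[OF B]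
      by (metis m_closed)
  qed
  have inv: "\<And>x. x \<in> bz A Z B \<Longrightarrow> inv x \<in> bz A Z B"
  proof -
    fix x assume "x \<in> bz A Z B"
    then obtain b where "x \<in> carrier A" "b \<in> B" "cl x = cl b"
      using bz_iff[OF B] by blast
    thus "inv x \<in> bz A Z B" using bz_iff[OF B] cl_inv sb_C[OF B] sb_inv[OF B]
      by (metis inv_closed)
  qed
  have z: "\<zero> \<in> bz A Z B" using bz_iff[OF B] sb_zero[OF B] by auto
  have "subgroup (bz A Z B) (add_monoid A)"
    by (rule subgroup.intro) (use s add neg z in \<open>auto simp: a_inv_def[symmetric]\<close>)
  moreover have "subgroup (bz A Z B) A"
    by (rule subgroup.intro) (use s mul inv z zero_one in \<open>auto\<close>)
  ultimately show ?thesis unfolding subbrace_def by simp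
qed

lemma bz_mono: "bz A Z B \<subseteq> bz A (cz A Z) B"
  unfolding bz_def using Z_cz by blast

lemma bz_eq: "subbrace A B \<Longrightarrow> B \<subseteq> Z \<Longrightarrow> bz A Z B = Z"
proof -
  assume B: "subbrace A B" and BZ: "B \<subseteq> Z"
  have "\<And>x b. x \<in> carrier A \<Longrightarrow> b \<in> B \<Longrightarrow> x \<ominus> b \<in> Z \<Longrightarrow> x \<in> Z"
    using minus_rel sb_C B BZ Z_add by (metis subsetD)
  moreover have "\<And>x. x \<in> Z \<Longrightarrow> x \<ominus> \<zero> \<in> Z" using ZC by (simp add: a_minus_def)
  ultimately show ?thesis unfolding bz_def using sb_zero[OF B] ZC by blast
qed

lemma bz_star: assumes B: "subbrace A B" and u: "u \<in> bz A (cz A Z) B" and v: "v \<in> bz A Z B"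
  shows "u \<star> v \<in> bz A Z B \<and> v \<star> u \<in> bz A Z B"
proof -
  obtain b where uC: "u \<in> carrier A" and b: "b \<in> B" and c: "u \<ominus> b \<in> cz A Z"
    using u unfolding bz_def by blast
  obtain b' where vC: "v \<in> carrier A" and b': "b' \<in> B" and e: "cl v = cl b'"
    using v bz_iff[OF B] by blast
  have bC: "b \<in> carrier A" using sb_C[OF B b] .
  have b'C: "b' \<in> carrier A" using sb_C[OF B b'] .
  define c0 where "c0 = u \<ominus> b"
  have c0C: "c0 \<in> carrier A" using c0_def uC bC by simp
  have ub: "u = b \<oplus> c0" unfolding c0_def using minus_rel uC bC by simp
  define c' where "c' = inv b \<otimes> u"
  have c'C: "c' \<in> carrier A" using c'_def bC uC by simp
  have "c' = inv b \<star> c0 \<oplus> c0" unfolding c'_def ub using inv_distr bC c0C by simp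
  moreover have "inv b \<star> c0 \<in> cz A Z"
    using Z_cz Z_st1 c c0_def by (meson bideal.cz_ideal bideal_axioms brace_ideal_def bC inv_closed)
  ultimately have c': "c' \<in> cz A Z" using cz_add c c0_def by simp
  have ubc: "u = b \<otimes> c'" unfolding c'_def using bC uC by (simp add: m_assoc[symmetric])
  have "cl (u \<star> v) = cl (u \<star> b')" using cl_st[OF uC uC vC b'C _ e] by simp
  also have "u \<star> b' = (b \<otimes> c') \<otimes> b' \<ominus> b \<otimes> c' \<ominus> b'" unfolding ubc bstar_def ..
  also have "cl \<dots> = cl (b \<otimes> (c' \<oplus> b') \<ominus> b \<otimes> c' \<ominus> b')"
  proof -
    have "cl ((b \<otimes> c') \<otimes> b') = cl (b \<otimes> (c' \<otimes> b'))" using bC c'C b'C by (simp add: m_assoc)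
    also have "\<dots> = cl (b \<otimes> (c' \<oplus> b'))" using cl_mult[OF bC bC _ _ refl cz_L[OF c' b'C]] bC c'C b'C by simp
    finally show ?thesis using bC c'C b'C by (simp add: cl_minus)
  qed
  also have "b \<otimes> (c' \<oplus> b') \<ominus> b \<otimes> c' \<ominus> b' = b \<star> b'"
  proof -
    have "b \<otimes> (c' \<oplus> b') = b \<otimes> c' \<oplus> b \<star> b' \<oplus> b'" using distr2 bC c'C b'C by simp
    moreover have "\<And>P S Q. P \<in> carrier A \<Longrightarrow> S \<in> carrier A \<Longrightarrow> Q \<in> carrier A \<Longrightarrow>
        P \<oplus> S \<oplus> Q \<oplus> \<ominus> P \<oplus> \<ominus> Q = S"
      by (metis a_assoc a_closed a_comm add.inv_solve_right)
    ultimately show ?thesis using bC c'C b'C unfolding a_minus_def by simp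
  qed
  finally have 1: "cl (u \<star> v) = cl (b \<star> b')" .
  have "cl (v \<star> u) = cl (b' \<star> u)" using cl_st[OF vC b'C uC uC e] by simp
  also have "b' \<star> u = b' \<star> b \<oplus> b' \<star> c0" unfolding ub using st_add_right b'C bC c0C by simp
  also have "cl \<dots> = cl (b' \<star> b)" using cl_addZ b'C bC c c0_def unfolding cz_def by auto
  finally have 2: "cl (v \<star> u) = cl (b' \<star> b)" .
  show ?thesis using 1 2 bz_iff[OF B] sb_st[OF B] b b' uC vC by (meson st_closed)
qed

end

lemma brace_bl: "brace A \<Longrightarrow> brace_l A"
  unfolding brace_def brace_l_def brace_l_axioms_def by auto

lemma bl_bideal: "brace_l A \<Longrightarrow> brace_ideal A Z \<Longrightarrow> bideal A Z"
  by (simp add: bideal_def bideal_axioms_def)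

lemma usc_ideal: "brace A \<Longrightarrow> brace_ideal A (upper_star_central A n)"
proof (induction n)
  case 0
  then show ?case using brace_l.zero_ideal[OF brace_bl] by simp
next
  case (Suc n)
  interpret bideal A "upper_star_central A n" using bl_bideal brace_bl Suc by blast
  show ?case using usc_step cz_ideal by simp
qed

lemma usc_suc: "brace A \<Longrightarrow> upper_star_central A (Suc n) = cz A (upper_star_central A n)"
proof -
  assume "brace A"
  then interpret bideal A "upper_star_central A n" using bl_bideal brace_bl usc_ideal by blast
  show ?thesis using usc_step by simp
qed

theorem lemma3p1:
  fixes A :: "('a, 'b) ring_scheme" and n :: nat and a :: 'a
  assumes "T_brace A"
    and "a \<in> upper_star_central A n"
  shows "brace_ideal A (br A a)"
proof -
  have br: "brace A" using assms(1) unfolding T_brace_def by simp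
  have T: "\<And>I J. brace_ideal A J \<Longrightarrow> brace_ideal (A\<lparr>carrier := J\<rparr>) I \<Longrightarrow> brace_ideal A I"
    using assms(1) unfolding T_brace_def by blast
  interpret brace_l A using brace_bl br .
  define U where "U = upper_star_central A"
  have Uid: "\<And>i. brace_ideal A (U i)" unfolding U_def by (rule usc_ideal[OF br])
  have Usuc: "\<And>i. U (Suc i) = cz A (U i)" unfolding U_def by (rule usc_suc[OF br])
  have Ubid: "\<And>i. bideal A (U i)" by (rule bl_bideal[OF brace_l_axioms Uid])
  have an: "a \<in> U n" using assms(2) unfolding U_def .
  have Unsb: "subbrace A (U n)" using Uid[of n] unfolding brace_ideal_def by (rule conjunct1)
  have aC: "a \<in> carrier A" using sb_C[OF Unsb an] .
  define B where "B = br A a"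
  have B: "subbrace A B" unfolding B_def by (rule br_props(1)[OF aC])
  have BU: "B \<subseteq> U n" unfolding B_def by (rule br_props(3)[OF aC Unsb an])
  define L where "L i = bz A (U i) B" for i
  have Lid: "brace_ideal A (L i)" if "i \<le> n" for i
    using that
  proof (induction rule: inc_induct)
    case base
    have "L n = U n" unfolding L_def using bideal.bz_eq[OF Ubid B BU] .
    show ?case unfolding \<open>L n = U n\<close> by (rule Uid)
  next
    case (step i)
    have Ls: "L (Suc i) = bz A (cz A (U i)) B" unfolding L_def Usuc ..
    have s1: "subbrace A (L i)" unfolding L_def using bideal.bz_subbrace[OF Ubid B] .
    have s2: "subbrace A (L (Suc i))" using step.IH unfolding brace_ideal_def by (rule conjunct1)
    have sub: "L i \<subseteq> L (Suc i)" unfolding Ls unfolding L_def using bideal.bz_mono[OF Ubid] .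
    have st: "\<And>u v. u \<in> L (Suc i) \<Longrightarrow> v \<in> L i \<Longrightarrow> u \<star> v \<in> L i \<and> v \<star> u \<in> L i"
      unfolding Ls unfolding L_def by (rule bideal.bz_star[OF Ubid B])
    have "brace_ideal (A\<lparr>carrier := L (Suc i)\<rparr>) (L i)" using restr_ideal[OF s1 s2 sub st] .
    thus ?case by (rule T[OF step.IH])
  qed
  have L0: "brace_ideal A (L 0)" by (rule Lid) simp
  have L0B: "L 0 = B" unfolding L_def U_def upper_star_central.simps(1) by (rule bz_zero[OF B])
  from L0 have "brace_ideal A B" unfolding L0B .
  thus ?thesis unfolding B_def .
qed

end
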